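(* Let $\nu$ be any probability measure on $\mathrm{U}(d)$ and $t$ a positive integer. Then $$\|T_\mu|_{\mathcal{H}_t}-T_\nu|_{\mathcal{H}_t}\|_\infty=\|T_{\mu,t}-T_{\nu,t}\|_\infty .$$
   Context: $\mu$ is the Haar probability measure on $\mathrm{U}(d)$. On $L^2(\mathrm{U}(d),\mu)$, for a probability measure $\nu$ define $(T_\nu F)(U)=\int\mathrm{d}\nu(V)\,F(V^{-1}U)$. $\mathcal{H}_t\subset L^2(\mathrm{U}(d))$ is the span of the functions $U\mapsto\mathrm{tr}(A\,U^{\otimes t}\otimes\bar U^{\otimes t})$, $A$ an operator on $(\mathbb{C}^d)^{\otimes 2t}$; it is invariant under $T_\nu$, and $T_\nu|_{\mathcal{H}_t}$ denotes the restriction. $T_{\nu,t}=\int\mathrm{d}\nu(U)\,U^{\otimes t}\otimes\bar U^{\otimes t}$ is the moment operator. $\|\cdot\|_\infty$ is the operator norm. *)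

theory Defs
  imports "HOL-Analysis.Analysis" "HOL-Probability.Probability"
begin

definition unitary_group :: "(complex^'n::finite^'n) set" where
  "unitary_group = {U. (\<chi> i j. cnj (U $ j $ i)) ** U = mat 1}"

definition prob_measure_U :: "(complex^'n::finite^'n) measure \<Rightarrow> bool" where
  "prob_measure_U \<nu> \<longleftrightarrow> prob_space \<nu> \<and> sets \<nu> = sets (restrict_space borel unitary_group)"

text \<open>Haar probability measure: a left-invariant Borel probability measure on U(d)
  (unique by the uniqueness of Haar measure on compact groups).\<close>
definition haar_measure_U :: "(complex^'n::finite^'n) measure \<Rightarrow> bool" where
  "haar_measure_U \<mu> \<longleftrightarrow> prob_measure_U \<mu> \<and>
     (\<forall>V\<in>unitary_group. \<forall>A\<in>sets \<mu>. emeasure \<mu> ((\<lambda>U. V ** U) ` A) = emeasure \<mu> A)"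

text \<open>Multi-indices for (C^d)^{\<otimes> 2t}: lists of length 2t.\<close>
definition multi_indices :: "nat \<Rightarrow> ('n::finite) list set" where
  "multi_indices t = {a. length a = 2 * t}"

text \<open>Matrix entries of U^{\<otimes>t} \<otimes> conj(U)^{\<otimes>t}.\<close>
definition tensor_entry :: "nat \<Rightarrow> complex^'n::finite^'n \<Rightarrow> 'n list \<Rightarrow> 'n list \<Rightarrow> complex" where
  "tensor_entry t U a b =
     (\<Prod>k<t. U $ (a ! k) $ (b ! k)) * (\<Prod>k<t. cnj (U $ (a ! (t + k)) $ (b ! (t + k))))"

definition moment_operator ::
  "(complex^'n::finite^'n) measure \<Rightarrow> nat \<Rightarrow> 'n list \<Rightarrow> 'n list \<Rightarrow> complex" where
  "moment_operator \<nu> t a b = (\<integral>U. tensor_entry t U a b \<partial>\<nu>)"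

definition mat_opnorm :: "'i set \<Rightarrow> ('i \<Rightarrow> 'i \<Rightarrow> complex) \<Rightarrow> real" where
  "mat_opnorm I A = Sup {sqrt (\<Sum>a\<in>I. (cmod (\<Sum>b\<in>I. A a b * x b))\<^sup>2) | x.
                           (\<Sum>b\<in>I. (cmod (x b))\<^sup>2) \<le> 1}"

text \<open>The space H_t: functions U \<mapsto> tr(A (U^{\<otimes>t} \<otimes> conj(U)^{\<otimes>t})).
  (This set is already a complex linear subspace, so it equals its span.)\<close>
definition H_space :: "nat \<Rightarrow> (complex^'n::finite^'n \<Rightarrow> complex) set" where
  "H_space t = {F. \<exists>A :: 'n list \<Rightarrow> 'n list \<Rightarrow> complex.
      F = (\<lambda>U. \<Sum>a\<in>multi_indices t. \<Sum>b\<in>multi_indices t. A a b * tensor_entry t U b a)}"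

definition conv_op ::
  "(complex^'n::finite^'n) measure \<Rightarrow> (complex^'n^'n \<Rightarrow> complex) \<Rightarrow> complex^'n^'n \<Rightarrow> complex" where
  "conv_op \<nu> F U = (\<integral>V. F (matrix_inv V ** U) \<partial>\<nu>)"

definition L2_norm :: "(complex^'n::finite^'n) measure \<Rightarrow> (complex^'n^'n \<Rightarrow> complex) \<Rightarrow> real" where
  "L2_norm \<mu> F = sqrt (\<integral>U. (cmod (F U))\<^sup>2 \<partial>\<mu>)"

definition restricted_diff_opnorm ::
  "(complex^'n::finite^'n) measure \<Rightarrow> (complex^'n^'n) measure \<Rightarrow> nat \<Rightarrow> real" where
  "restricted_diff_opnorm \<mu> \<nu> t =
     Sup {L2_norm \<mu> (\<lambda>U. conv_op \<mu> F U - conv_op \<nu> F U) | F. F \<in> H_space t \<and> L2_norm \<mu> F \<le> 1}"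

end

theory Submission
  imports Defs
begin


definition adjm :: "complex^'n::finite^'n \<Rightarrow> complex^'n^'n" where
  "adjm U = (\<chi> i j. cnj (U $ j $ i))"

lemma finite_MI: "finite (multi_indices t :: ('n::finite) list set)"
  unfolding multi_indices_def using finite_lists_length_eq[of "UNIV::'n set" "2*t"] by simp

lemma prod_sum_lists:
  fixes h :: "nat \<Rightarrow> 'n::finite \<Rightarrow> complex"
  shows "(\<Prod>k<n. \<Sum>l\<in>UNIV. h k l) = (\<Sum>c\<in>{c. length c = n}. \<Prod>k<n. h k (c!k))"
proof (induction n arbitrary: h)
  case 0
  then show ?case by simp
next
  case (Suc n)
  have set: "{c. length c = Suc n} = (\<lambda>(l,c'). l#c') ` (UNIV \<times> {c. length c = n})"
    by (auto simp: length_Suc_conv image_iff)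
  have inj: "inj_on (\<lambda>(l,c'). l#c') (UNIV \<times> {c::'n list. length c = n})"
    by (auto simp: inj_on_def)
  have "(\<Prod>k<Suc n. \<Sum>l\<in>UNIV. h k l) = (\<Sum>l\<in>UNIV. h 0 l) * (\<Prod>k<n. \<Sum>l\<in>UNIV. h (Suc k) l)"
    by (rule prod.lessThan_Suc_shift)
  also have "\<dots> = (\<Sum>l\<in>UNIV. h 0 l) * (\<Sum>c\<in>{c. length c = n}. \<Prod>k<n. h (Suc k) (c!k))"
    using Suc[of "\<lambda>k. h (Suc k)"] by simp
  also have "\<dots> = (\<Sum>(l,c')\<in>UNIV \<times> {c. length c = n}. h 0 l * (\<Prod>k<n. h (Suc k) (c'!k)))"
    by (simp add: sum_product sum.cartesian_product)
  also have "\<dots> = (\<Sum>(l,c')\<in>UNIV \<times> {c. length c = n}. \<Prod>k<Suc n. h k ((l#c')!k))"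
    by (simp add: prod.lessThan_Suc_shift del: prod.lessThan_Suc)
  also have "\<dots> = (\<Sum>c\<in>{c. length c = Suc n}. \<Prod>k<Suc n. h k (c!k))"
    unfolding set by (subst sum.reindex[OF inj]) (simp add: case_prod_unfold)
  finally show ?case .
qed

lemma prod_split2:
  fixes f :: "nat \<Rightarrow> complex"
  shows "(\<Prod>k<2*t. f k) = (\<Prod>k<t. f k) * (\<Prod>k<t. f (t + k))"
proof -
  have e: "{..<2*t} = {..<t} \<union> {t..<t+t}" by auto
  have "(\<Prod>k<2*t. f k) = (\<Prod>k<t. f k) * (\<Prod>k\<in>{t..<t+t}. f k)"
    unfolding e by (rule prod.union_disjoint) auto
  also have "(\<Prod>k\<in>{t..<t+t}. f k) = (\<Prod>k<t. f (t + k))"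
    using prod.shift_bounds_nat_ivl[of f 0 t t] by (simp add: atLeast0LessThan add.commute)
  finally show ?thesis .
qed

definition fac :: "nat \<Rightarrow> nat \<Rightarrow> complex^'n::finite^'n \<Rightarrow> 'n \<Rightarrow> 'n \<Rightarrow> complex" where
  "fac t k U i j = (if k < t then U $ i $ j else cnj (U $ i $ j))"

lemma te_prod: "tensor_entry t U a b = (\<Prod>k<2*t. fac t k U (a!k) (b!k))"
  unfolding tensor_entry_def prod_split2 fac_def by simp

lemma fac_mult: "fac t k (U ** V) i j = (\<Sum>l\<in>UNIV. fac t k U i l * fac t k V l j)"
  unfolding fac_def by (simp add: matrix_matrix_mult_def)

lemma te_mult:
  "tensor_entry t (U ** V) a b = (\<Sum>c\<in>multi_indices t. tensor_entry t U a c * tensor_entry t V c b)"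
proof -
  have "tensor_entry t (U ** V) a b = (\<Prod>k<2*t. \<Sum>l\<in>UNIV. fac t k U (a!k) l * fac t k V l (b!k))"
    unfolding te_prod fac_mult ..
  also have "\<dots> = (\<Sum>c\<in>{c. length c = 2*t}. \<Prod>k<2*t. fac t k U (a!k) (c!k) * fac t k V (c!k) (b!k))"
    by (rule prod_sum_lists)
  also have "\<dots> = (\<Sum>c\<in>multi_indices t. tensor_entry t U a c * tensor_entry t V c b)"
    unfolding multi_indices_def te_prod by (simp add: prod.distrib)
  finally show ?thesis .
qed

lemma te_id:
  assumes "a \<in> multi_indices t" "b \<in> multi_indices t"
  shows "tensor_entry t (mat 1) a b = (if a = b then 1 else 0)"
proof -
  have "tensor_entry t (mat 1) a b = (\<Prod>k<2*t. if a!k = b!k then 1 else 0)"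
    unfolding te_prod fac_def by (intro prod.cong) (auto simp: mat_def)
  also have "\<dots> = (if a = b then 1 else 0)"
  proof (cases "a = b")
    case True then show ?thesis by simp
  next
    case False
    then obtain k where "k < 2*t" "a!k \<noteq> b!k"
      using assms unfolding multi_indices_def by (auto simp: list_eq_iff_nth_eq)
    then have "(\<Prod>k<2*t. if a!k = b!k then 1 else 0) = (0::complex)"
      by (intro prod_zero) auto
    then show ?thesis using False by simp
  qed
  finally show ?thesis .
qed

lemma te_adj: "tensor_entry t (adjm U) a b = cnj (tensor_entry t U b a)"
  unfolding tensor_entry_def adjm_def by simp

lemma adjm_adjm[simp]: "adjm (adjm U) = U"
  unfolding adjm_def by (simp add: vec_eq_iff)

lemma adjm_mult: "adjm (U ** V) = adjm V ** adjm U"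
  unfolding adjm_def by (simp add: vec_eq_iff matrix_matrix_mult_def mult.commute)

lemma UG_iff: "U \<in> unitary_group \<longleftrightarrow> adjm U ** U = mat 1"
  unfolding unitary_group_def adjm_def by simp

lemma UG_right: "U \<in> unitary_group \<Longrightarrow> U ** adjm U = mat 1"
  unfolding UG_iff using matrix_left_right_inverse by blast

lemma UG_adj: "U \<in> unitary_group \<Longrightarrow> adjm U \<in> unitary_group"
  using UG_right UG_iff by fastforce

lemma UG_mult: "U \<in> unitary_group \<Longrightarrow> V \<in> unitary_group \<Longrightarrow> U ** V \<in> unitary_group"
  unfolding UG_iff adjm_mult
  by (metis matrix_mul_assoc matrix_mul_lid)

lemma te_unit1:
  assumes "U \<in> unitary_group" "a \<in> multi_indices t" "b \<in> multi_indices t"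
  shows "(\<Sum>c\<in>multi_indices t. cnj (tensor_entry t U c a) * tensor_entry t U c b) = (if a = b then 1 else 0)"
proof -
  have "(\<Sum>c\<in>multi_indices t. cnj (tensor_entry t U c a) * tensor_entry t U c b) = tensor_entry t (adjm U ** U) a b"
    by (simp add: te_mult te_adj)
  then show ?thesis using assms te_id UG_iff by metis
qed

lemma te_unit2:
  assumes "U \<in> unitary_group" "a \<in> multi_indices t" "b \<in> multi_indices t"
  shows "(\<Sum>c\<in>multi_indices t. tensor_entry t U a c * cnj (tensor_entry t U b c)) = (if a = b then 1 else 0)"
proof -
  have "(\<Sum>c\<in>multi_indices t. tensor_entry t U a c * cnj (tensor_entry t U b c)) = tensor_entry t (U ** adjm U) a b"
    by (simp add: te_mult te_adj)
  then show ?thesis using assms te_id UG_right by metis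
qed

lemma UG_entry_le1:
  assumes "U \<in> unitary_group" shows "cmod (U $ i $ j) \<le> 1"
proof -
  have "(U ** adjm U) $ i $ i = 1" using UG_right[OF assms] by (simp add: mat_def)
  then have "(\<Sum>l\<in>UNIV. U $ i $ l * cnj (U $ i $ l)) = 1"
    by (simp add: matrix_matrix_mult_def adjm_def)
  moreover have "\<And>l. U $ i $ l * cnj (U $ i $ l) = complex_of_real ((cmod (U $ i $ l))\<^sup>2)"
    using complex_norm_square by metis
  ultimately have "(\<Sum>l\<in>UNIV. complex_of_real ((cmod (U $ i $ l))\<^sup>2)) = 1"
    by simp
  then have s: "(\<Sum>l\<in>UNIV. (cmod (U $ i $ l))\<^sup>2) = 1"
    by (metis of_real_eq_1_iff of_real_sum)
  have "(cmod (U $ i $ j))\<^sup>2 \<le> (\<Sum>l\<in>UNIV. (cmod (U $ i $ l))\<^sup>2)"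
    by (rule member_le_sum) auto
  then have "(cmod (U $ i $ j))\<^sup>2 \<le> 1" using s by simp
  then show ?thesis by (simp add: power_le_one_iff abs_le_square_iff)
qed

lemma te_le1:
  assumes "U \<in> unitary_group" shows "cmod (tensor_entry t U a b) \<le> 1"
  unfolding te_prod prod_norm[symmetric] fac_def
  by (rule prod_le_1) (auto simp: UG_entry_le1[OF assms])

lemma te_cont: "continuous_on UNIV (\<lambda>U. tensor_entry t U a b)"
  unfolding tensor_entry_def by (intro continuous_intros)



lemma pm_space: "prob_measure_U M \<Longrightarrow> space M = unitary_group"
  unfolding prob_measure_U_def by (metis sets_eq_imp_space_eq space_restrict_space space_borel Int_UNIV_right)

lemma pm_prob: "prob_measure_U M \<Longrightarrow> prob_space M"
  unfolding prob_measure_U_def by simp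

lemma meas_UG:
  fixes f :: "complex^'n::finite^'n \<Rightarrow> 'b::topological_space"
  assumes "prob_measure_U M" "continuous_on UNIV f"
  shows "f \<in> borel_measurable M"
proof -
  have "f \<in> borel_measurable (restrict_space borel unitary_group)"
    by (rule measurable_restrict_space1) (rule borel_measurable_continuous_onI[OF assms(2)])
  then show ?thesis using assms(1) unfolding prob_measure_U_def
    using measurable_cong_sets by blast
qed

lemma int_UG:
  fixes f :: "complex^'n::finite^'n \<Rightarrow> 'b::{banach,second_countable_topology}"
  assumes "prob_measure_U M" "continuous_on UNIV f" "\<And>U. U \<in> unitary_group \<Longrightarrow> norm (f U) \<le> B"
  shows "integrable M f"
proof -
  interpret prob_space M using pm_prob[OF assms(1)] .
  show ?thesis
    by (rule integrable_const_bound[where B=B])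
      (auto intro!: AE_I2 meas_UG assms simp: pm_space[OF assms(1)])
qed

definition G :: "nat \<Rightarrow> ('n::finite list \<Rightarrow> 'n list \<Rightarrow> complex) \<Rightarrow> complex^'n^'n \<Rightarrow> complex" where
  "G t W U = (\<Sum>a\<in>multi_indices t. \<Sum>c\<in>multi_indices t. cnj (W a c) * tensor_entry t U c a)"

definition act :: "nat \<Rightarrow> ('n::finite list \<Rightarrow> 'n list \<Rightarrow> complex) \<Rightarrow> ('n list \<Rightarrow> 'n list \<Rightarrow> complex)
     \<Rightarrow> ('n list \<Rightarrow> 'n list \<Rightarrow> complex)" where
  "act t M W = (\<lambda>a c. \<Sum>b\<in>multi_indices t. M c b * W a b)"

definition adjA :: "('i \<Rightarrow> 'i \<Rightarrow> complex) \<Rightarrow> ('i \<Rightarrow> 'i \<Rightarrow> complex)" where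
  "adjA M = (\<lambda>c b. cnj (M b c))"

definition E :: "nat \<Rightarrow> ('n::finite list \<Rightarrow> 'n list \<Rightarrow> complex) \<Rightarrow> complex^'n^'n \<Rightarrow> 'n list \<Rightarrow> 'n list \<Rightarrow> complex" where
  "E t W U c b = (\<Sum>a\<in>multi_indices t. cnj (W a b) * tensor_entry t U c a)"

lemma adjA_adjA[simp]: "adjA (adjA M) = M"
  unfolding adjA_def by simp

lemma G_cont: "continuous_on UNIV (G t W)"
  unfolding G_def by (intro continuous_intros te_cont)

lemma E_cont: "continuous_on UNIV (\<lambda>U. E t W U c b)"
  unfolding E_def by (intro continuous_intros te_cont)

lemma G_bound:
  assumes "U \<in> unitary_group"
  shows "norm (G t W U) \<le> (\<Sum>a\<in>multi_indices t. \<Sum>c\<in>multi_indices t. cmod (W a c))"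
  unfolding G_def
proof (rule order_trans[OF norm_sum sum_mono], rule order_trans[OF norm_sum sum_mono])
  fix a c
  show "cmod (cnj (W a c) * tensor_entry t U c a) \<le> cmod (W a c)"
    using te_le1[OF assms, of t c a] by (simp add: norm_mult mult_left_le)
qed

lemma E_bound:
  assumes "U \<in> unitary_group"
  shows "norm (E t W U c b) \<le> (\<Sum>a\<in>multi_indices t. cmod (W a b))"
  unfolding E_def
proof (rule order_trans[OF norm_sum sum_mono])
  fix a
  show "cmod (cnj (W a b) * tensor_entry t U c a) \<le> cmod (W a b)"
    using te_le1[OF assms, of t c a] by (simp add: norm_mult mult_left_le)
qed

lemma G_expand:
  "G t (act t M W) U = (\<Sum>c\<in>multi_indices t. \<Sum>b\<in>multi_indices t. cnj (M c b) * E t W U c b)"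
proof -
  have "G t (act t M W) U = (\<Sum>a\<in>multi_indices t. \<Sum>c\<in>multi_indices t. \<Sum>b\<in>multi_indices t.
          cnj (M c b) * (cnj (W a b) * tensor_entry t U c a))"
    unfolding G_def act_def by (simp add: sum_distrib_right mult.assoc)
  also have "\<dots> = (\<Sum>c\<in>multi_indices t. \<Sum>b\<in>multi_indices t. \<Sum>a\<in>multi_indices t.
          cnj (M c b) * (cnj (W a b) * tensor_entry t U c a))"
    by (subst sum.swap) (rule sum.cong[OF refl], rule sum.swap)
  also have "\<dots> = (\<Sum>c\<in>multi_indices t. \<Sum>b\<in>multi_indices t. cnj (M c b) * E t W U c b)"
    unfolding E_def by (simp add: sum_distrib_left)
  finally show ?thesis .
qed

lemma G_mult: "G t W (V ** U) = G t (act t (adjA (tensor_entry t V)) W) U"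
proof -
  have "G t W (V ** U) = (\<Sum>a\<in>multi_indices t. \<Sum>c\<in>multi_indices t. \<Sum>d\<in>multi_indices t.
          cnj (W a c) * (tensor_entry t V c d * tensor_entry t U d a))"
    unfolding G_def te_mult by (simp add: sum_distrib_left)
  also have "\<dots> = (\<Sum>a\<in>multi_indices t. \<Sum>d\<in>multi_indices t. \<Sum>c\<in>multi_indices t.
          cnj (W a c) * (tensor_entry t V c d * tensor_entry t U d a))"
    by (rule sum.cong[OF refl], rule sum.swap)
  also have "\<dots> = G t (act t (adjA (tensor_entry t V)) W) U"
    unfolding G_def act_def adjA_def by (simp add: sum_distrib_left sum_distrib_right mult_ac)
  finally show ?thesis .
qed

lemma G_diff: "G t (act t (\<lambda>a b. M1 a b - M2 a b) W) U = G t (act t M1 W) U - G t (act t M2 W) U"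
  unfolding G_def act_def by (simp add: algebra_simps sum_subtractf)

lemma G_scale: "G t (\<lambda>a b. complex_of_real r * W a b) U = complex_of_real r * G t W U"
  unfolding G_def by (simp add: sum_distrib_left mult_ac)

lemma act_scale: "act t M (\<lambda>a b. complex_of_real r * W a b) = (\<lambda>a b. complex_of_real r * act t M W a b)"
  unfolding act_def by (simp add: sum_distrib_left mult_ac)



lemma minv_UG:
  assumes "V \<in> unitary_group" shows "matrix_inv V = adjm V"
proof -
  let ?X = "matrix_inv V"
  have "V ** ?X = mat 1 \<and> ?X ** V = mat 1"
    unfolding matrix_inv_def by (rule someI[of _ "adjm V"]) (use UG_right UG_iff assms in auto)
  then have "?X = (?X ** V) ** adjm V"
    using UG_right[OF assms] by (metis matrix_mul_assoc matrix_mul_rid)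
  then show ?thesis using \<open>V ** ?X = mat 1 \<and> ?X ** V = mat 1\<close> by simp
qed

lemma adjA_te_adjm: "adjA (tensor_entry t (adjm V)) = tensor_entry t V"
  unfolding adjA_def by (simp add: te_adj)

lemma G_adj_mult: "G t W (adjm V ** U) = G t (act t (tensor_entry t V) W) U"
  by (simp add: G_mult adjA_te_adjm)

lemma integral_expand:
  assumes "prob_measure_U \<nu>"
  shows "(\<integral>V. (\<Sum>c\<in>multi_indices t. \<Sum>b\<in>multi_indices t. cnj (tensor_entry t V c b) * (D c b :: complex)) \<partial>\<nu>)
       = (\<Sum>c\<in>multi_indices t. \<Sum>b\<in>multi_indices t. cnj (moment_operator \<nu> t c b) * D c b)"
proof -
  have int: "integrable \<nu> (\<lambda>V. cnj (tensor_entry t V c b) * D c b)" for c b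
    by (rule int_UG[OF assms, where B="cmod (D c b)"])
       (auto intro!: continuous_intros te_cont simp: norm_mult te_le1 mult_left_le_one_le)
  have int2: "integrable \<nu> (\<lambda>V. \<Sum>b\<in>multi_indices t. cnj (tensor_entry t V c b) * D c b)" for c
    using int by auto
  show ?thesis
    apply (subst Bochner_Integration.integral_sum[OF int2])
    apply (rule sum.cong[OF refl])
    apply (subst Bochner_Integration.integral_sum[OF int])
    apply (simp add: moment_operator_def)
    done
qed

lemma conv_G:
  assumes "prob_measure_U \<nu>"
  shows "conv_op \<nu> (G t W) U = G t (act t (moment_operator \<nu> t) W) U"
proof -
  have "conv_op \<nu> (G t W) U = (\<integral>V. (\<Sum>c\<in>multi_indices t. \<Sum>b\<in>multi_indices t.
           cnj (tensor_entry t V c b) * E t W U c b) \<partial>\<nu>)"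
    unfolding conv_op_def
  proof (rule Bochner_Integration.integral_cong[OF refl])
    fix V assume "V \<in> space \<nu>"
    then have "V \<in> unitary_group" using pm_space[OF assms] by simp
    then show "G t W (matrix_inv V ** U) = (\<Sum>c\<in>multi_indices t. \<Sum>b\<in>multi_indices t.
           cnj (tensor_entry t V c b) * E t W U c b)"
      by (simp add: minv_UG G_adj_mult G_expand)
  qed
  also have "\<dots> = G t (act t (moment_operator \<nu> t) W) U"
    by (simp add: integral_expand[OF assms] G_expand)
  finally show ?thesis .
qed

lemma H_G: "F \<in> H_space t \<Longrightarrow> \<exists>W. F = G t W"
proof -
  assume "F \<in> H_space t"
  then obtain A where "F = (\<lambda>U. \<Sum>a\<in>multi_indices t. \<Sum>b\<in>multi_indices t. A a b * tensor_entry t U b a)"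
    unfolding H_space_def by blast
  then have "F = G t (\<lambda>a b. cnj (A a b))" unfolding G_def by simp
  then show ?thesis by blast
qed

lemma G_H: "G t W \<in> H_space t"
  unfolding H_space_def G_def by (auto intro!: exI[of _ "\<lambda>a b. cnj (W a b)"])

lemma mult_cont: "continuous_on UNIV (\<lambda>U::complex^'n::finite^'n. V ** U)"
  unfolding matrix_matrix_mult_def by (intro continuous_intros)

lemma haar_distr:
  assumes "haar_measure_U \<mu>" "V \<in> unitary_group"
  shows "distr \<mu> \<mu> (\<lambda>U. V ** U) = \<mu>" and "(\<lambda>U. V ** U) \<in> measurable \<mu> \<mu>"
proof -
  have pm: "prob_measure_U \<mu>" using assms unfolding haar_measure_U_def by simp
  have sets: "sets \<mu> = sets (restrict_space borel unitary_group)"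
    using pm unfolding prob_measure_U_def by simp
  have "(\<lambda>U. V ** U) \<in> measurable (restrict_space borel unitary_group) (restrict_space borel unitary_group)"
    by (rule measurable_restrict_space3[OF borel_measurable_continuous_onI[OF mult_cont]])
       (use UG_mult assms(2) in auto)
  then show meas: "(\<lambda>U. V ** U) \<in> measurable \<mu> \<mu>"
    using sets measurable_cong_sets by blast
  show "distr \<mu> \<mu> (\<lambda>U. V ** U) = \<mu>"
  proof (rule measure_eqI)
    show "sets (distr \<mu> \<mu> (\<lambda>U. V ** U)) = sets \<mu>" by simp
    fix A assume "A \<in> sets (distr \<mu> \<mu> (\<lambda>U. V ** U))"
    then have A: "A \<in> sets \<mu>" by simp
    then have Asub: "A \<subseteq> unitary_group" using sets.sets_into_space pm_space[OF pm] by blast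
    have "(\<lambda>U. V ** U) -` A \<inter> space \<mu> = (\<lambda>U. adjm V ** U) ` A"
    proof (intro equalityI subsetI)
      fix U assume "U \<in> (\<lambda>U. V ** U) -` A \<inter> space \<mu>"
      then have "V ** U \<in> A" by auto
      show "U \<in> (\<lambda>U. adjm V ** U) ` A"
      proof (intro image_eqI[of _ _ "V ** U"])
        have "adjm V ** V = mat 1" using UG_iff assms(2) by blast
        then show "U = adjm V ** (V ** U)" by (simp add: matrix_mul_assoc)
      qed fact
    next
      fix U assume "U \<in> (\<lambda>U. adjm V ** U) ` A"
      then obtain U' where U': "U' \<in> A" "U = adjm V ** U'" by auto
      have "V ** U \<in> A"
        using UG_right[OF assms(2)] U' by (simp add: matrix_mul_assoc)
      moreover have "U \<in> space \<mu>"
        using U' Asub pm_space[OF pm] UG_mult[OF UG_adj[OF assms(2)], of U'] by auto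
      ultimately show "U \<in> (\<lambda>U. V ** U) -` A \<inter> space \<mu>" by auto
    qed
    then show "emeasure (distr \<mu> \<mu> (\<lambda>U. V ** U)) A = emeasure \<mu> A"
      using assms(1) UG_adj[OF assms(2)] A unfolding haar_measure_U_def by (simp add: emeasure_distr[OF meas A])
  qed
qed

lemma haar_inv:
  fixes f :: "complex^'n::finite^'n \<Rightarrow> complex"
  assumes "haar_measure_U \<mu>" "V \<in> unitary_group" "f \<in> borel_measurable \<mu>"
  shows "(\<integral>U. f (V ** U) \<partial>\<mu>) = integral\<^sup>L \<mu> f"
  using integral_distr[OF haar_distr(2)[OF assms(1,2)] assms(3)] haar_distr(1)[OF assms(1,2)]
  by simp



lemma CS_int:
  fixes f g :: "'a \<Rightarrow> complex"
  assumes i1: "integrable M (\<lambda>x. f x * cnj (g x))" and i2: "integrable M (\<lambda>x. (cmod (f x))\<^sup>2)"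
    and i3: "integrable M (\<lambda>x. (cmod (g x))\<^sup>2)" and i4: "integrable M (\<lambda>x. cmod (f x) * cmod (g x))"
  shows "(cmod (\<integral>x. f x * cnj (g x) \<partial>M))\<^sup>2 \<le> (\<integral>x. (cmod (f x))\<^sup>2 \<partial>M) * (\<integral>x. (cmod (g x))\<^sup>2 \<partial>M)"
proof -
  define A where "A = (\<integral>x. (cmod (f x))\<^sup>2 \<partial>M)"
  define B where "B = (\<integral>x. (cmod (g x))\<^sup>2 \<partial>M)"
  define p where "p = (\<integral>x. cmod (f x) * cmod (g x) \<partial>M)"
  have A0: "A \<ge> 0" unfolding A_def by simp
  have B0: "B \<ge> 0" unfolding B_def by simp
  have p0: "p \<ge> 0" unfolding p_def by simp
  have le: "cmod (\<integral>x. f x * cnj (g x) \<partial>M) \<le> p"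
    unfolding p_def using integral_norm_bound[of M "\<lambda>x. f x * cnj (g x)"]
    by (simp add: norm_mult)
  have key: "2 * s * p \<le> s\<^sup>2 * A + B" if "s > 0" for s
  proof -
    have "(\<integral>x. 2 * s * (cmod (f x) * cmod (g x)) \<partial>M) \<le> (\<integral>x. s\<^sup>2 * (cmod (f x))\<^sup>2 + (cmod (g x))\<^sup>2 \<partial>M)"
    proof (rule integral_mono)
      show "integrable M (\<lambda>x. 2 * s * (cmod (f x) * cmod (g x)))" using i4 by simp
      show "integrable M (\<lambda>x. s\<^sup>2 * (cmod (f x))\<^sup>2 + (cmod (g x))\<^sup>2)" using i2 i3 by simp
      fix x
      have "0 \<le> (s * cmod (f x) - cmod (g x))\<^sup>2" by simp
      then show "2 * s * (cmod (f x) * cmod (g x)) \<le> s\<^sup>2 * (cmod (f x))\<^sup>2 + (cmod (g x))\<^sup>2"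
        by (simp add: power2_eq_square algebra_simps)
    qed
    then show ?thesis unfolding A_def B_def p_def using i2 i3 by simp
  qed
  have "p\<^sup>2 \<le> A * B"
  proof (cases "p = 0")
    case True then show ?thesis using A0 B0 by simp
  next
    case False
    then have pp: "p > 0" using p0 by simp
    show ?thesis
    proof (cases "A = 0")
      case True
      have "2 * ((B + 1) / (2 * p)) * p \<le> B" using key[of "(B + 1) / (2 * p)"] pp B0 True by simp
      then have "B + 1 \<le> B" using pp by simp
      then show ?thesis by simp
    next
      case False
      then have Ap: "A > 0" using A0 by simp
      have "2 * (p / A) * p \<le> (p / A)\<^sup>2 * A + B" using key[of "p / A"] pp Ap by simp
      then have "2 * p\<^sup>2 / A \<le> p\<^sup>2 / A + B" using Ap by (simp add: power2_eq_square field_simps)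
      then have "p\<^sup>2 / A \<le> B" by simp
      then show ?thesis using Ap by (simp add: field_simps mult.commute)
    qed
  qed
  moreover have "(cmod (\<integral>x. f x * cnj (g x) \<partial>M))\<^sup>2 \<le> p\<^sup>2"
    using le by (simp add: power_mono)
  ultimately show ?thesis unfolding A_def B_def by linarith
qed

definition BG :: "nat \<Rightarrow> ('n::finite list \<Rightarrow> 'n list \<Rightarrow> complex) \<Rightarrow> real" where
  "BG t W = (\<Sum>a\<in>multi_indices t. \<Sum>c\<in>multi_indices t. cmod (W a c))"

lemma BG_nonneg: "BG t W \<ge> 0" unfolding BG_def by (simp add: sum_nonneg)

definition qf :: "(complex^'n::finite^'n) measure \<Rightarrow> nat \<Rightarrow> ('n list \<Rightarrow> 'n list \<Rightarrow> complex) \<Rightarrow> ('n list \<Rightarrow> 'n list \<Rightarrow> complex) \<Rightarrow> complex" where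
  "qf \<mu> t Y Z = (\<integral>U. G t Y U * cnj (G t Z U) \<partial>\<mu>)"

definition Qf :: "(complex^'n::finite^'n) measure \<Rightarrow> nat \<Rightarrow> ('n list \<Rightarrow> 'n list \<Rightarrow> complex) \<Rightarrow> real" where
  "Qf \<mu> t Y = (\<integral>U. (cmod (G t Y U))\<^sup>2 \<partial>\<mu>)"

lemma int_GG: "prob_measure_U \<mu> \<Longrightarrow> integrable \<mu> (\<lambda>U. G t Y U * cnj (G t Z U))"
  by (rule int_UG[where B="BG t Y * BG t Z"])
     (auto intro!: continuous_intros G_cont mult_mono BG_nonneg simp: norm_mult G_bound[unfolded BG_def[symmetric]])

lemma int_GG2: "prob_measure_U \<mu> \<Longrightarrow> integrable \<mu> (\<lambda>U. cmod (G t Y U) * cmod (G t Z U))"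
  by (rule int_UG[where B="BG t Y * BG t Z"])
     (auto intro!: continuous_intros G_cont mult_mono BG_nonneg simp: norm_mult G_bound[unfolded BG_def[symmetric]])

lemma int_Q: "prob_measure_U \<mu> \<Longrightarrow> integrable \<mu> (\<lambda>U. (cmod (G t Y U))\<^sup>2)"
  by (rule int_UG[where B="(BG t Y)\<^sup>2"])
     (auto intro!: continuous_intros G_cont power_mono BG_nonneg simp: G_bound[unfolded BG_def[symmetric]])

lemma int_EG: "prob_measure_U \<mu> \<Longrightarrow> integrable \<mu> (\<lambda>U. E t Y U c b * cnj (G t Z U))"
  by (rule int_UG[where B="(\<Sum>a\<in>multi_indices t. cmod (Y a b)) * BG t Z"])
     (auto intro!: continuous_intros G_cont E_cont mult_mono BG_nonneg sum_nonneg
       simp: norm_mult G_bound[unfolded BG_def[symmetric]] E_bound)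

lemma int_GE: "prob_measure_U \<mu> \<Longrightarrow> integrable \<mu> (\<lambda>U. G t Y U * cnj (E t Z U c b))"
  by (rule int_UG[where B="BG t Y * (\<Sum>a\<in>multi_indices t. cmod (Z a b))"])
     (auto intro!: continuous_intros G_cont E_cont mult_mono BG_nonneg sum_nonneg
       simp: norm_mult G_bound[unfolded BG_def[symmetric]] E_bound)

lemma qf_Q: "qf \<mu> t Y Y = complex_of_real (Qf \<mu> t Y)"
  unfolding qf_def Qf_def by (simp add: complex_norm_square[symmetric] del: of_real_power)

lemma qf_cnj: "qf \<mu> t Y Z = cnj (qf \<mu> t Z Y)"
  unfolding qf_def Bochner_Integration.integral_cnj[symmetric] by (simp add: mult.commute)

lemma Qf_nonneg: "Qf \<mu> t Y \<ge> 0"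
  unfolding Qf_def by simp

lemma qf_CS: "prob_measure_U \<mu> \<Longrightarrow> (cmod (qf \<mu> t Y Z))\<^sup>2 \<le> Qf \<mu> t Y * Qf \<mu> t Z"
  unfolding qf_def Qf_def by (rule CS_int[OF int_GG int_Q int_Q int_GG2])

lemma qf_exp1:
  assumes "prob_measure_U \<mu>"
  shows "qf \<mu> t (act t M Y) Z = (\<Sum>c\<in>multi_indices t. \<Sum>b\<in>multi_indices t.
            cnj (M c b) * (\<integral>U. E t Y U c b * cnj (G t Z U) \<partial>\<mu>))"
proof -
  have "qf \<mu> t (act t M Y) Z = (\<integral>U. (\<Sum>c\<in>multi_indices t. \<Sum>b\<in>multi_indices t.
            cnj (M c b) * (E t Y U c b * cnj (G t Z U))) \<partial>\<mu>)"
    unfolding qf_def G_expand by (simp add: sum_distrib_right mult.assoc)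
  also have "\<dots> = (\<Sum>c\<in>multi_indices t. \<Sum>b\<in>multi_indices t.
            cnj (M c b) * (\<integral>U. E t Y U c b * cnj (G t Z U) \<partial>\<mu>))"
    using int_EG[OF assms] by (simp add: Bochner_Integration.integral_sum)
  finally show ?thesis .
qed

lemma qf_exp2:
  assumes "prob_measure_U \<mu>"
  shows "qf \<mu> t Y (act t (adjA M) Z) = (\<Sum>c\<in>multi_indices t. \<Sum>b\<in>multi_indices t.
            cnj (M c b) * (\<integral>U. G t Y U * cnj (E t Z U b c) \<partial>\<mu>))"
proof -
  have "qf \<mu> t Y (act t (adjA M) Z) = (\<integral>U. (\<Sum>c\<in>multi_indices t. \<Sum>b\<in>multi_indices t.
            cnj (M b c) * (G t Y U * cnj (E t Z U c b))) \<partial>\<mu>)"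
    unfolding qf_def G_expand adjA_def by (simp add: sum_distrib_left mult_ac)
  also have "\<dots> = (\<Sum>c\<in>multi_indices t. \<Sum>b\<in>multi_indices t.
            cnj (M b c) * (\<integral>U. G t Y U * cnj (E t Z U c b) \<partial>\<mu>))"
    using int_GE[OF assms] by (simp add: Bochner_Integration.integral_sum)
  also have "\<dots> = (\<Sum>c\<in>multi_indices t. \<Sum>b\<in>multi_indices t.
            cnj (M c b) * (\<integral>U. G t Y U * cnj (E t Z U b c) \<partial>\<mu>))"
    by (rule sum.swap)
  finally show ?thesis .
qed

lemma qf_exp:
  assumes "prob_measure_U \<mu>"
  shows "\<exists>\<delta>. \<forall>M. qf \<mu> t (act t M Y) Z - qf \<mu> t Y (act t (adjA M) Z) =
            (\<Sum>c\<in>multi_indices t. \<Sum>b\<in>multi_indices t. cnj (M c b) * \<delta> c b)"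
  by (rule exI[of _ "\<lambda>c b. (\<integral>U. E t Y U c b * cnj (G t Z U) \<partial>\<mu>) - (\<integral>U. G t Y U * cnj (E t Z U b c) \<partial>\<mu>)"])
     (simp add: qf_exp1[OF assms] qf_exp2[OF assms] algebra_simps sum_subtractf)

lemma qf_inv:
  assumes "haar_measure_U \<mu>" "V \<in> unitary_group"
  shows "qf \<mu> t (act t (tensor_entry t V) Y) Z = qf \<mu> t Y (act t (adjA (tensor_entry t V)) Z)"
proof -
  have pm: "prob_measure_U \<mu>" using assms unfolding haar_measure_U_def by simp
  define f where "f U = G t Y (adjm V ** U) * cnj (G t Z U)" for U
  have fm: "f \<in> borel_measurable \<mu>"
    unfolding f_def
    by (rule meas_UG[OF pm])
       (intro continuous_intros continuous_on_compose2[OF G_cont mult_cont] G_cont, auto)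
  have VV: "adjm V ** V = mat 1" using assms(2) UG_iff by blast
  have "qf \<mu> t (act t (tensor_entry t V) Y) Z = integral\<^sup>L \<mu> f"
    unfolding qf_def f_def G_adj_mult ..
  also have "\<dots> = (\<integral>U. f (V ** U) \<partial>\<mu>)"
    by (rule haar_inv[OF assms fm, symmetric])
  also have "\<dots> = qf \<mu> t Y (act t (adjA (tensor_entry t V)) Z)"
    unfolding qf_def f_def G_mult[symmetric] by (simp add: matrix_mul_assoc VV)
  finally show ?thesis .
qed



lemma qf_adj_moment:
  assumes "haar_measure_U \<mu>" "prob_measure_U \<nu>"
  shows "qf \<mu> t (act t (moment_operator \<nu> t) Y) Z = qf \<mu> t Y (act t (adjA (moment_operator \<nu> t)) Z)"
proof -
  have pm: "prob_measure_U \<mu>" using assms unfolding haar_measure_U_def by simp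
  obtain \<delta> where d: "\<And>M. qf \<mu> t (act t M Y) Z - qf \<mu> t Y (act t (adjA M) Z) =
            (\<Sum>c\<in>multi_indices t. \<Sum>b\<in>multi_indices t. cnj (M c b) * \<delta> c b)"
    using qf_exp[OF pm, of t Y Z] by blast
  have "(\<Sum>c\<in>multi_indices t. \<Sum>b\<in>multi_indices t. cnj (moment_operator \<nu> t c b) * \<delta> c b)
      = (\<integral>V. (\<Sum>c\<in>multi_indices t. \<Sum>b\<in>multi_indices t. cnj (tensor_entry t V c b) * \<delta> c b) \<partial>\<nu>)"
    by (rule integral_expand[OF assms(2), symmetric])
  also have "\<dots> = (\<integral>V. 0 \<partial>\<nu>)"
  proof (rule Bochner_Integration.integral_cong[OF refl])
    fix V assume "V \<in> space \<nu>"
    then have "V \<in> unitary_group" using pm_space[OF assms(2)] by simp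
    then show "(\<Sum>c\<in>multi_indices t. \<Sum>b\<in>multi_indices t. cnj (tensor_entry t V c b) * \<delta> c b) = 0"
      using d[of "tensor_entry t V"] qf_inv[OF assms(1)] by simp
  qed
  finally show ?thesis using d[of "moment_operator \<nu> t"] by simp
qed

definition Xm :: "(complex^'n::finite^'n) measure \<Rightarrow> (complex^'n^'n) measure \<Rightarrow> nat \<Rightarrow> 'n list \<Rightarrow> 'n list \<Rightarrow> complex" where
  "Xm \<mu> \<nu> t = (\<lambda>a b. moment_operator \<mu> t a b - moment_operator \<nu> t a b)"

lemma qf_adj_X:
  assumes "haar_measure_U \<mu>" "prob_measure_U \<nu>"
  shows "qf \<mu> t (act t (Xm \<mu> \<nu> t) Y) Z = qf \<mu> t Y (act t (adjA (Xm \<mu> \<nu> t)) Z)"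
proof -
  have pm: "prob_measure_U \<mu>" using assms unfolding haar_measure_U_def by simp
  obtain \<delta> where d: "\<And>M. qf \<mu> t (act t M Y) Z - qf \<mu> t Y (act t (adjA M) Z) =
            (\<Sum>c\<in>multi_indices t. \<Sum>b\<in>multi_indices t. cnj (M c b) * \<delta> c b)"
    using qf_exp[OF pm, of t Y Z] by blast
  have "(\<Sum>c\<in>multi_indices t. \<Sum>b\<in>multi_indices t. cnj (Xm \<mu> \<nu> t c b) * \<delta> c b) =
     (\<Sum>c\<in>multi_indices t. \<Sum>b\<in>multi_indices t. cnj (moment_operator \<mu> t c b) * \<delta> c b) -
     (\<Sum>c\<in>multi_indices t. \<Sum>b\<in>multi_indices t. cnj (moment_operator \<nu> t c b) * \<delta> c b)"
    unfolding Xm_def by (simp add: algebra_simps sum_subtractf)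
  also have "\<dots> = 0"
    using d[of "moment_operator \<mu> t"] d[of "moment_operator \<nu> t"]
      qf_adj_moment[OF assms(1) pm] qf_adj_moment[OF assms(1,2)] by simp
  finally show ?thesis using d[of "Xm \<mu> \<nu> t"] by simp
qed

lemma qf_adj_X':
  assumes "haar_measure_U \<mu>" "prob_measure_U \<nu>"
  shows "qf \<mu> t (act t (adjA (Xm \<mu> \<nu> t)) Y) Z = qf \<mu> t Y (act t (Xm \<mu> \<nu> t) Z)"
  using qf_adj_X[OF assms(1,2), of t Z Y]
  by (metis qf_cnj)

subsection \<open>Matrix operator norm\<close>

lemma opn_set_le:
  assumes "finite I" "(\<Sum>b\<in>I. (cmod (x b))\<^sup>2) \<le> 1"
  shows "sqrt (\<Sum>a\<in>I. (cmod (\<Sum>b\<in>I. M a b * x b))\<^sup>2) \<le> (\<Sum>a\<in>I. \<Sum>b\<in>I. cmod (M a b))"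
proof -
  have xb: "cmod (x b) \<le> 1" if "b \<in> I" for b
  proof -
    have "(cmod (x b))\<^sup>2 \<le> (\<Sum>b\<in>I. (cmod (x b))\<^sup>2)" by (rule member_le_sum) (use assms that in auto)
    then have "(cmod (x b))\<^sup>2 \<le> 1" using assms by linarith
    then show ?thesis by (simp add: power_le_one_iff abs_le_square_iff)
  qed
  have "sqrt (\<Sum>a\<in>I. (cmod (\<Sum>b\<in>I. M a b * x b))\<^sup>2) = L2_set (\<lambda>a. cmod (\<Sum>b\<in>I. M a b * x b)) I"
    by (simp add: L2_set_def)
  also have "\<dots> \<le> (\<Sum>a\<in>I. cmod (\<Sum>b\<in>I. M a b * x b))"
    by (rule L2_set_le_sum) simp
  also have "\<dots> \<le> (\<Sum>a\<in>I. \<Sum>b\<in>I. cmod (M a b))"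
  proof (rule sum_mono, rule order_trans[OF norm_sum sum_mono])
    fix a b assume "b \<in> I"
    then show "cmod (M a b * x b) \<le> cmod (M a b)"
      using xb by (simp add: norm_mult mult_left_le)
  qed
  finally show ?thesis .
qed

lemma opn_bdd: "finite I \<Longrightarrow> bdd_above {sqrt (\<Sum>a\<in>I. (cmod (\<Sum>b\<in>I. M a b * x b))\<^sup>2) | x.
                           (\<Sum>b\<in>I. (cmod (x b))\<^sup>2) \<le> 1}"
  by (rule bdd_aboveI[where M="\<Sum>a\<in>I. \<Sum>b\<in>I. cmod (M a b)"]) (auto dest: opn_set_le)

lemma opn_mem: "(\<Sum>b\<in>I. (cmod (x b))\<^sup>2) \<le> 1 \<Longrightarrow> sqrt (\<Sum>a\<in>I. (cmod (\<Sum>b\<in>I. M a b * x b))\<^sup>2) \<in>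
   {sqrt (\<Sum>a\<in>I. (cmod (\<Sum>b\<in>I. M a b * x b))\<^sup>2) | x. (\<Sum>b\<in>I. (cmod (x b))\<^sup>2) \<le> 1}"
  by blast

lemma opn_ge:
  assumes "finite I" "(\<Sum>b\<in>I. (cmod (x b))\<^sup>2) \<le> 1"
  shows "L2_set (\<lambda>a. cmod (\<Sum>b\<in>I. M a b * x b)) I \<le> mat_opnorm I M"
  unfolding mat_opnorm_def L2_set_def by (rule cSup_upper[OF opn_mem[OF assms(2), of M] opn_bdd[OF assms(1), of M]])

lemma opn_nonneg: "finite I \<Longrightarrow> 0 \<le> mat_opnorm I M"
  using opn_ge[of I "\<lambda>_. 0" M] by (simp add: L2_set_0')

lemma opn_bound:
  assumes "finite I"
  shows "L2_set (\<lambda>a. cmod (\<Sum>b\<in>I. M a b * x b)) I \<le> mat_opnorm I M * L2_set (\<lambda>b. cmod (x b)) I"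
proof (cases "L2_set (\<lambda>b. cmod (x b)) I = 0")
  case True
  then have "\<forall>b\<in>I. x b = 0" using L2_set_eq_0_iff[OF assms] by simp
  then show ?thesis by (simp add: L2_set_def)
next
  case False
  define n where "n = L2_set (\<lambda>b. cmod (x b)) I"
  have n0: "n > 0" using False n_def L2_set_nonneg by (metis order_less_le)
  define y where "y b = x b / complex_of_real n" for b
  have "(\<Sum>b\<in>I. (cmod (y b))\<^sup>2) = (\<Sum>b\<in>I. (cmod (x b))\<^sup>2) / n\<^sup>2"
    unfolding y_def by (simp add: norm_divide power_divide sum_divide_distrib)
  also have "\<dots> = 1" using n0 unfolding n_def L2_set_def by simp
  finally have "L2_set (\<lambda>a. cmod (\<Sum>b\<in>I. M a b * y b)) I \<le> mat_opnorm I M"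
    using opn_ge[OF assms] by simp
  moreover have "L2_set (\<lambda>a. cmod (\<Sum>b\<in>I. M a b * y b)) I = L2_set (\<lambda>a. cmod (\<Sum>b\<in>I. M a b * x b)) I / n"
  proof -
    have "L2_set (\<lambda>a. cmod (\<Sum>b\<in>I. M a b * y b)) I = L2_set (\<lambda>a. cmod (\<Sum>b\<in>I. M a b * x b) * (1/n)) I"
      unfolding y_def using n0
      by (intro L2_set_cong) (auto simp: sum_divide_distrib[symmetric] norm_divide)
    also have "\<dots> = L2_set (\<lambda>a. cmod (\<Sum>b\<in>I. M a b * x b)) I * (1/n)"
      by (rule L2_set_left_distrib[symmetric]) (use n0 in simp)
    finally show ?thesis by simp
  qed
  ultimately have "L2_set (\<lambda>a. cmod (\<Sum>b\<in>I. M a b * x b)) I / n \<le> mat_opnorm I M" by simp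
  then show ?thesis using n0 unfolding n_def[symmetric] by (simp add: divide_le_eq mult.commute)
qed

lemma L2_sq: "(L2_set f I)\<^sup>2 = (\<Sum>i\<in>I. (f i)\<^sup>2)"
  unfolding L2_set_def by (simp add: sum_nonneg)

lemma opn_adj_bound:
  assumes "finite I"
  shows "L2_set (\<lambda>b. cmod (\<Sum>a\<in>I. cnj (M a b) * y a)) I \<le> mat_opnorm I M * L2_set (\<lambda>a. cmod (y a)) I"
proof -
  define z where "z b = (\<Sum>a\<in>I. cnj (M a b) * y a)" for b
  define c where "c = mat_opnorm I M"
  have c0: "c \<ge> 0" unfolding c_def using opn_nonneg[OF assms] .
  have "complex_of_real (\<Sum>b\<in>I. (cmod (z b))\<^sup>2) = (\<Sum>b\<in>I. z b * cnj (z b))"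
    by (simp add: complex_norm_square del: of_real_power)
  also have "\<dots> = (\<Sum>b\<in>I. \<Sum>a\<in>I. cnj (M a b) * y a * cnj (z b))"
    unfolding z_def by (simp add: sum_distrib_right)
  also have "\<dots> = (\<Sum>a\<in>I. cnj (cnj (y a) * (\<Sum>b\<in>I. M a b * z b)))"
    by (subst sum.swap) (simp add: sum_distrib_left mult_ac)
  finally have eq: "complex_of_real (\<Sum>b\<in>I. (cmod (z b))\<^sup>2) = (\<Sum>a\<in>I. cnj (cnj (y a) * (\<Sum>b\<in>I. M a b * z b)))" .
  have "(\<Sum>b\<in>I. (cmod (z b))\<^sup>2) = cmod (complex_of_real (\<Sum>b\<in>I. (cmod (z b))\<^sup>2))"
    by (subst norm_of_real) (simp add: sum_nonneg)
  also have "\<dots> \<le> (\<Sum>a\<in>I. cmod (y a) * cmod (\<Sum>b\<in>I. M a b * z b))"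
    unfolding eq by (rule order_trans[OF norm_sum]) (simp only: complex_mod_cnj norm_mult order_refl)
  also have "\<dots> \<le> L2_set (\<lambda>a. cmod (y a)) I * L2_set (\<lambda>a. cmod (\<Sum>b\<in>I. M a b * z b)) I"
    using L2_set_mult_ineq[of "\<lambda>a. cmod (y a)" "\<lambda>a. cmod (\<Sum>b\<in>I. M a b * z b)" I] by simp
  also have "\<dots> \<le> L2_set (\<lambda>a. cmod (y a)) I * (c * L2_set (\<lambda>b. cmod (z b)) I)"
    by (rule mult_left_mono) (use opn_bound[OF assms, of M z] c_def in auto)
  finally have "(L2_set (\<lambda>b. cmod (z b)) I)\<^sup>2 \<le> (c * L2_set (\<lambda>a. cmod (y a)) I) * L2_set (\<lambda>b. cmod (z b)) I"
    unfolding L2_sq by (simp add: mult_ac)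
  then have "L2_set (\<lambda>b. cmod (z b)) I \<le> c * L2_set (\<lambda>a. cmod (y a)) I"
  proof -
    assume h: "(L2_set (\<lambda>b. cmod (z b)) I)\<^sup>2 \<le> (c * L2_set (\<lambda>a. cmod (y a)) I) * L2_set (\<lambda>b. cmod (z b)) I"
    show ?thesis
  proof (cases "L2_set (\<lambda>b. cmod (z b)) I = 0")
    case True then show ?thesis using c0 by simp
  next
    case False
    then have "L2_set (\<lambda>b. cmod (z b)) I > 0" using L2_set_nonneg by (metis order_less_le)
    then show ?thesis using h by (simp add: power2_eq_square mult_le_cancel_right)
  qed
  qed
  then show ?thesis unfolding z_def c_def .
qed



definition rn :: "nat \<Rightarrow> ('n::finite list \<Rightarrow> 'n list \<Rightarrow> complex) \<Rightarrow> 'n list \<Rightarrow> real" where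
  "rn t Y a = L2_set (\<lambda>c. cmod (Y a c)) (multi_indices t)"

lemma rn_act: "rn t (act t M Y) a \<le> mat_opnorm (multi_indices t) M * rn t Y a"
  unfolding rn_def act_def using opn_bound[OF finite_MI, of M "Y a"] by simp

lemma rn_act_adj: "rn t (act t (adjA M) Y) a \<le> mat_opnorm (multi_indices t) M * rn t Y a"
  unfolding rn_def act_def adjA_def using opn_adj_bound[OF finite_MI, of M "Y a"] by simp

lemma BG_rn: "BG t (Y :: 'n::finite list \<Rightarrow> _)  \<le> real (card (multi_indices t :: 'n::finite list set)) * (\<Sum>a\<in>multi_indices t. rn t Y a)"
  unfolding BG_def sum_distrib_left
proof (rule sum_mono)
  fix a
  have "(\<Sum>c\<in>multi_indices t. cmod (Y a c)) \<le> (\<Sum>c\<in>(multi_indices t :: 'n list set). rn t Y a)"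
    unfolding rn_def by (rule sum_mono) (rule member_le_L2_set[OF finite_MI])
  then show "(\<Sum>c\<in>multi_indices t. cmod (Y a c)) \<le> real (card (multi_indices t :: 'n list set)) * rn t Y a" by simp
qed

lemma qf_bound:
  assumes "prob_measure_U \<mu>"
  shows "cmod (qf \<mu> t Y Z) \<le> BG t Y * BG t Z"
proof -
  interpret prob_space \<mu> using pm_prob[OF assms] .
  have "cmod (qf \<mu> t Y Z) \<le> (\<integral>U. cmod (G t Y U * cnj (G t Z U)) \<partial>\<mu>)"
    unfolding qf_def by (rule integral_norm_bound)
  also have "\<dots> \<le> BG t Y * BG t Z"
  proof (rule integral_le_const)
    show "integrable \<mu> (\<lambda>U. cmod (G t Y U * cnj (G t Z U)))"
      using int_GG[OF assms] by simp
    show "AE U in \<mu>. cmod (G t Y U * cnj (G t Z U)) \<le> BG t Y * BG t Z"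
      by (rule AE_I2)
         (auto simp: pm_space[OF assms] norm_mult G_bound[unfolded BG_def[symmetric]]
               intro!: mult_mono BG_nonneg)
  qed
  finally show ?thesis .
qed

lemma upper_main:
  fixes \<mu> \<nu> :: "(complex^'n::finite^'n) measure"
  assumes haar: "haar_measure_U \<mu>" and pn: "prob_measure_U \<nu>"
  shows "Qf \<mu> t (act t (Xm \<mu> \<nu> t) W) \<le> (mat_opnorm (multi_indices t) (Xm \<mu> \<nu> t))\<^sup>2 * Qf \<mu> t W"
proof -
  have pm: "prob_measure_U \<mu>" using haar unfolding haar_measure_U_def by simp
  define X where "X = Xm \<mu> \<nu> t"
  define c where "c = mat_opnorm (multi_indices t) X"
  define d where "d = c\<^sup>2"
  define S where "S Y = act t (adjA X) (act t X Y)" for Y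
  define P where "P m = (S ^^ m) W" for m
  define s where "s = Qf \<mu> t W"
  have c0: "c \<ge> 0" unfolding c_def by (rule opn_nonneg[OF finite_MI])
  have d0: "d \<ge> 0" unfolding d_def by simp
  have s0: "s \<ge> 0" unfolding s_def by (rule Qf_nonneg)
  have S_adj: "qf \<mu> t (S Y) Z = qf \<mu> t Y (S Z)" for Y Z
    unfolding S_def X_def qf_adj_X'[OF haar pn] qf_adj_X[OF haar pn] ..
  have S_X: "qf \<mu> t (S Y) Y = complex_of_real (Qf \<mu> t (act t X Y))" for Y
    unfolding S_def X_def qf_adj_X'[OF haar pn] qf_Q ..
  have P_shift: "qf \<mu> t (P (j + k)) (P l) = qf \<mu> t (P j) (P (k + l))" for j k l
  proof (induction k arbitrary: l)
    case 0 then show ?case by simp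
  next
    case (Suc k)
    have "qf \<mu> t (P (j + Suc k)) (P l) = qf \<mu> t (S (P (j + k))) (P l)"
      unfolding P_def by simp
    also have "\<dots> = qf \<mu> t (P (j + k)) (P (Suc l))"
      unfolding S_adj P_def by simp
    also have "\<dots> = qf \<mu> t (P j) (P (k + Suc l))" by (rule Suc.IH)
    finally show ?case by simp
  qed
  have P2: "qf \<mu> t (P (2 * m)) W = complex_of_real (Qf \<mu> t (P m))" for m
    using P_shift[of m m 0] by (simp add: P_def mult_2 qf_Q)
  have rnS: "rn t (S Y) a \<le> d * rn t Y a" for Y a
  proof -
    have "rn t (S Y) a \<le> c * rn t (act t X Y) a"
      unfolding S_def c_def by (rule rn_act_adj)
    also have "\<dots> \<le> c * (c * rn t Y a)"
      by (rule mult_left_mono[OF _ c0]) (unfold c_def, rule rn_act)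
    finally show ?thesis by (simp add: d_def power2_eq_square mult.assoc)
  qed
  have rnP: "rn t (P m) a \<le> d ^ m * rn t W a" for m a
  proof (induction m)
    case 0 then show ?case by (simp add: P_def)
  next
    case (Suc m)
    have "rn t (P (Suc m)) a \<le> d * rn t (P m) a" unfolding P_def using rnS by simp
    also have "\<dots> \<le> d * (d ^ m * rn t W a)" by (rule mult_left_mono[OF Suc d0])
    finally show ?case by (simp add: mult.assoc)
  qed
  define K where "K = real (card (multi_indices t :: 'n list set)) * (\<Sum>a\<in>multi_indices t. rn t W a) * BG t W"
  have Pbound: "cmod (qf \<mu> t (P m) W) \<le> K * d ^ m" for m
  proof -
    have h1: "BG t (P m) \<le> real (card (multi_indices t :: 'n list set)) * (\<Sum>a\<in>multi_indices t. rn t (P m) a)"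
      by (rule BG_rn)
    have h2: "real (card (multi_indices t :: 'n list set)) * (\<Sum>a\<in>multi_indices t. rn t (P m) a) \<le> real (card (multi_indices t :: 'n list set)) * (\<Sum>a\<in>multi_indices t. d ^ m * rn t W a)"
      by (intro mult_left_mono sum_mono rnP) auto
    from order_trans[OF h1 h2] have "BG t (P m) \<le> real (card (multi_indices t :: 'n list set)) * (\<Sum>a\<in>multi_indices t. rn t W a) * d ^ m"
      by (simp add: sum_distrib_left[symmetric] mult_ac)
    then have "BG t (P m) * BG t W \<le> (real (card (multi_indices t :: 'n list set)) * (\<Sum>a\<in>multi_indices t. rn t W a) * d ^ m) * BG t W"
      by (rule mult_right_mono[OF _ BG_nonneg])
    then have "BG t (P m) * BG t W \<le> K * d ^ m"
      unfolding K_def by (simp add: mult_ac)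
    then show ?thesis using qf_bound[OF pm, of t "P m" W] by simp
  qed
  define b where "b k = Qf \<mu> t (if k = 0 then act t X W else P (2 ^ (k - 1)))" for k :: nat
  have b0: "b k \<ge> 0" for k unfolding b_def by (rule Qf_nonneg)
  have bq: "qf \<mu> t (P (2 ^ k)) W = complex_of_real (b k)" for k
  proof (cases k)
    case 0 then show ?thesis using S_X[of W] by (simp add: b_def P_def)
  next
    case (Suc k') then show ?thesis using P2[of "2 ^ k'"] by (simp add: b_def)
  qed
  have bCS: "(b k)\<^sup>2 \<le> b (Suc k) * s" for k
  proof -
    have "(cmod (qf \<mu> t (P (2 ^ k)) W))\<^sup>2 \<le> Qf \<mu> t (P (2 ^ k)) * Qf \<mu> t W"
      by (rule qf_CS[OF pm])
    then show ?thesis using bq[of k] b0[of k] by (simp add: b_def s_def)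
  qed
  have bB: "b k \<le> K * d ^ (2 ^ k)" for k
    using Pbound[of "2 ^ k"] bq[of k] b0[of k] by simp
  have goal: "b 0 \<le> d * s"
  proof (rule ccontr)
    assume "\<not> b 0 \<le> d * s"
    then have gt: "b 0 > d * s" by simp
    show False
    proof (cases "s = 0")
      case True
      then have "(b 0)\<^sup>2 \<le> 0" using bCS[of 0] by simp
      then show False using gt True by simp
    next
      case False
      then have sp: "s > 0" using s0 by simp
      show False
      proof (cases "d = 0")
        case True
        then show False using bB[of 0] gt by simp
      next
        case False
        then have dp: "d > 0" using d0 by simp
        define r where "r = b 0 / (d * s)"
        have r1: "r > 1" unfolding r_def using gt dp sp by simp
        have grow: "b k \<ge> r ^ (2 ^ k) * d ^ (2 ^ k) * s" for k
        proof (induction k)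
          case 0 then show ?case unfolding r_def using dp sp by simp
        next
          case (Suc k)
          have pos: "0 \<le> r ^ (2 ^ k) * d ^ (2 ^ k) * s" using r1 dp sp by simp
          have "(r ^ (2 ^ k) * d ^ (2 ^ k) * s)\<^sup>2 \<le> (b k)\<^sup>2"
            by (rule power_mono[OF Suc pos])
          also have "\<dots> \<le> b (Suc k) * s" by (rule bCS)
          finally have "(r ^ (2 ^ k) * d ^ (2 ^ k) * s)\<^sup>2 \<le> b (Suc k) * s" .
          then have "r ^ (2 ^ Suc k) * d ^ (2 ^ Suc k) * s * s \<le> b (Suc k) * s"
            by (simp add: power2_eq_square power_mult_distrib power_add mult_2 mult_ac)
          then show ?case using sp by simp
        qed
        have rk: "r ^ (2 ^ k) * s \<le> K" for k
        proof -
          have "r ^ (2 ^ k) * d ^ (2 ^ k) * s \<le> K * d ^ (2 ^ k)" using grow[of k] bB[of k] by linarith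
          then show ?thesis using dp by (simp add: mult_ac)
        qed
        have bern: "1 + real k * (r - 1) \<le> r ^ (2 ^ k)" for k
        proof -
          have "1 + real (2 ^ k) * (r - 1) \<le> (1 + (r - 1)) ^ (2 ^ k)"
            by (rule Bernoulli_inequality) (use r1 in simp)
          moreover have "real k \<le> real (2 ^ k)" by (simp add: less_imp_le)
          ultimately show ?thesis using r1 by (smt (verit) mult_right_mono)
        qed
        obtain k :: nat where k: "real k > K / (s * (r - 1))" using reals_Archimedean2 by blast
        have "(1 + real k * (r - 1)) * s \<le> K" using bern[of k] rk[of k] sp
          by (smt (verit) mult_right_mono)
        moreover have "real k * (r - 1) * s > K"
          using k r1 sp by (simp add: field_simps)
        ultimately show False using sp by (simp add: algebra_simps)
      qed
    qed
  qed
  then show ?thesis unfolding b_def d_def c_def s_def X_def by simp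
qed



lemma D_G:
  assumes "haar_measure_U \<mu>" "prob_measure_U \<nu>"
  shows "(\<lambda>U. conv_op \<mu> (G t W) U - conv_op \<nu> (G t W) U) = G t (act t (Xm \<mu> \<nu> t) W)"
proof -
  have pm: "prob_measure_U \<mu>" using assms unfolding haar_measure_U_def by simp
  show ?thesis
    unfolding conv_G[OF pm] conv_G[OF assms(2)] Xm_def G_diff ..
qed

lemma L2_G: "L2_norm \<mu> (G t W) = sqrt (Qf \<mu> t W)"
  unfolding L2_norm_def Qf_def ..

lemma Qf_scale: "Qf \<mu> t (\<lambda>a b. complex_of_real r * W a b) = r\<^sup>2 * Qf \<mu> t W"
  unfolding Qf_def G_scale by (simp add: norm_mult power_mult_distrib)

lemma act_zero: "act t M (\<lambda>a b. 0) = (\<lambda>a b. 0)"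
  unfolding act_def by simp

lemma Qf_zero: "Qf \<mu> t (\<lambda>a b. 0) = 0"
  unfolding Qf_def G_def by simp

lemma sum_unit_identity:
  assumes "U \<in> unitary_group"
  shows "(\<Sum>i\<in>multi_indices t. (cmod (\<Sum>c\<in>multi_indices t. cnj (y c) * tensor_entry t U c i))\<^sup>2)
       = (\<Sum>c\<in>multi_indices t. (cmod (y c))\<^sup>2)"
proof -
  let ?I = "multi_indices t"
  have "complex_of_real (\<Sum>i\<in>?I. (cmod (\<Sum>c\<in>?I. cnj (y c) * tensor_entry t U c i))\<^sup>2)
      = (\<Sum>i\<in>?I. (\<Sum>c\<in>?I. cnj (y c) * tensor_entry t U c i) * cnj (\<Sum>d\<in>?I. cnj (y d) * tensor_entry t U d i))"
    by (simp add: complex_norm_square del: of_real_power cnj_sum)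
  also have "\<dots> = (\<Sum>i\<in>?I. \<Sum>c\<in>?I. \<Sum>d\<in>?I. cnj (y c) * y d * (tensor_entry t U c i * cnj (tensor_entry t U d i)))"
    by (simp add: sum_distrib_left sum_distrib_right mult_ac)
  also have "\<dots> = (\<Sum>c\<in>?I. \<Sum>d\<in>?I. \<Sum>i\<in>?I. cnj (y c) * y d * (tensor_entry t U c i * cnj (tensor_entry t U d i)))"
    by (subst sum.swap) (rule sum.cong[OF refl], rule sum.swap)
  also have "\<dots> = (\<Sum>c\<in>?I. \<Sum>d\<in>?I. cnj (y c) * y d * (if c = d then 1 else 0))"
    by (intro sum.cong refl) (simp add: sum_distrib_left[symmetric] te_unit2[OF assms])
  also have "\<dots> = (\<Sum>c\<in>?I. cnj (y c) * y c)"
    by (simp add: finite_MI if_distrib cong: if_cong)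
  also have "\<dots> = complex_of_real (\<Sum>c\<in>?I. (cmod (y c))\<^sup>2)"
    by (simp add: complex_norm_square mult.commute del: of_real_power)
  finally show ?thesis by (simp only: of_real_eq_iff)
qed

definition Wi :: "('n::finite list \<Rightarrow> complex) \<Rightarrow> 'n list \<Rightarrow> 'n list \<Rightarrow> 'n list \<Rightarrow> complex" where
  "Wi y i = (\<lambda>a b. if a = i then y b else 0)"

lemma G_Wi:
  assumes "i \<in> multi_indices t"
  shows "G t (Wi y i) U = (\<Sum>c\<in>multi_indices t. cnj (y c) * tensor_entry t U c i)"
proof -
  have "\<And>a. (\<Sum>c\<in>multi_indices t. cnj (Wi y i a c) * tensor_entry t U c a) =
     (if a = i then (\<Sum>c\<in>multi_indices t. cnj (y c) * tensor_entry t U c i) else 0)"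
    unfolding Wi_def by auto
  then show ?thesis unfolding G_def using assms by (simp add: finite_MI)
qed

lemma act_Wi: "act t M (Wi y i) = Wi (\<lambda>c. \<Sum>b\<in>multi_indices t. M c b * y b) i"
  unfolding act_def Wi_def by (auto simp: fun_eq_iff if_distrib cong: if_cong)

lemma sum_Qf_Wi:
  assumes "prob_measure_U \<mu>"
  shows "(\<Sum>i\<in>multi_indices t. Qf \<mu> t (Wi y i)) = (\<Sum>c\<in>multi_indices t. (cmod (y c))\<^sup>2)"
proof -
  interpret prob_space \<mu> using pm_prob[OF assms] .
  have "(\<Sum>i\<in>multi_indices t. Qf \<mu> t (Wi y i)) = (\<integral>U. (\<Sum>i\<in>multi_indices t. (cmod (G t (Wi y i) U))\<^sup>2) \<partial>\<mu>)"
    unfolding Qf_def by (rule Bochner_Integration.integral_sum[symmetric]) (rule int_Q[OF assms])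
  also have "\<dots> = (\<integral>U. (\<Sum>c\<in>multi_indices t. (cmod (y c))\<^sup>2) \<partial>\<mu>)"
  proof (rule Bochner_Integration.integral_cong[OF refl])
    fix U assume "U \<in> space \<mu>"
    then have "U \<in> unitary_group" using pm_space[OF assms] by simp
    then show "(\<Sum>i\<in>multi_indices t. (cmod (G t (Wi y i) U))\<^sup>2) = (\<Sum>c\<in>multi_indices t. (cmod (y c))\<^sup>2)"
      using sum_unit_identity[OF \<open>U \<in> unitary_group\<close>, where t=t and y=y] by (simp add: G_Wi)
  qed
  also have "\<dots> = (\<Sum>c\<in>multi_indices t. (cmod (y c))\<^sup>2)"
    by (simp add: prob_space)
  finally show ?thesis .
qed

theorem proposition1:
  fixes \<mu> \<nu> :: "(complex^'n::finite^'n) measure" and t :: nat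
  assumes "haar_measure_U \<mu>" and "prob_measure_U \<nu>" and "t > 0"
  shows "restricted_diff_opnorm \<mu> \<nu> t =
           mat_opnorm (multi_indices t) (\<lambda>a b. moment_operator \<mu> t a b - moment_operator \<nu> t a b)"
proof -
  have pm: "prob_measure_U \<mu>" using assms unfolding haar_measure_U_def by simp
  define X where "X = Xm \<mu> \<nu> t"
  define c where "c = mat_opnorm (multi_indices t) X"
  have c0: "c \<ge> 0" unfolding c_def by (rule opn_nonneg[OF finite_MI])
  define S where "S = {L2_norm \<mu> (\<lambda>U. conv_op \<mu> F U - conv_op \<nu> F U) | F. F \<in> H_space t \<and> L2_norm \<mu> F \<le> 1}"
  have memS: "sqrt (Qf \<mu> t (act t X W)) \<in> S" if "Qf \<mu> t W \<le> 1" for W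
    unfolding S_def
    using that G_H[of t W] by (auto simp: D_G[OF assms(1,2)] L2_G X_def intro!: exI[of _ "G t W"])
  have Sle: "x \<le> c" if "x \<in> S" for x
  proof -
    obtain F where F: "x = L2_norm \<mu> (\<lambda>U. conv_op \<mu> F U - conv_op \<nu> F U)" "F \<in> H_space t" "L2_norm \<mu> F \<le> 1"
      using \<open>x \<in> S\<close> unfolding S_def by blast
    obtain W where W: "F = G t W" using H_G[OF F(2)] by blast
    have x: "x = sqrt (Qf \<mu> t (act t X W))"
      using F(1) unfolding W D_G[OF assms(1,2)] L2_G X_def .
    have "sqrt (Qf \<mu> t W) \<le> 1" using F(3) unfolding W L2_G .
    then have QW: "Qf \<mu> t W \<le> 1" by simp
    have "Qf \<mu> t (act t X W) \<le> c\<^sup>2 * Qf \<mu> t W"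
      using upper_main[OF assms(1,2)] unfolding X_def c_def .
    also have "\<dots> \<le> c\<^sup>2" using QW by (simp add: mult_left_le)
    finally show ?thesis unfolding x using c0 by (simp add: real_sqrt_le_iff real_le_lsqrt)
  qed
  have S0: "0 \<in> S" using memS[of "\<lambda>a b. 0"] by (simp add: Qf_zero act_zero)
  have bdd: "bdd_above S" using Sle by (auto simp: bdd_above_def)
  have up: "Sup S \<le> c" using S0 Sle by (intro cSup_least) auto
  have low: "c - \<epsilon> \<le> Sup S" if "\<epsilon> > 0" for \<epsilon>
  proof (cases "c - \<epsilon> \<le> 0")
    case True
    then show ?thesis using cSup_upper[OF S0 bdd] by simp
  next
    case False
    define T where "T = {sqrt (\<Sum>a\<in>multi_indices t. (cmod (\<Sum>b\<in>multi_indices t. X a b * x b))\<^sup>2) | x.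
                           (\<Sum>b\<in>multi_indices t. (cmod (x b))\<^sup>2) \<le> 1}"
    have cT: "c = Sup T" unfolding c_def T_def mat_opnorm_def ..
    have Tne: "T \<noteq> {}"
    proof -
      have "sqrt (\<Sum>a\<in>multi_indices t. (cmod (\<Sum>b\<in>multi_indices t. X a b * (\<lambda>_. 0) b))\<^sup>2) \<in> T"
        unfolding T_def by (rule opn_mem) simp
      then show ?thesis by blast
    qed
    have "c - \<epsilon> < Sup T" using that cT by simp
    then obtain v where "v \<in> T" "c - \<epsilon> < v" using less_cSupD[OF Tne] by blast
    then obtain x where x1: "(\<Sum>b\<in>multi_indices t. (cmod (x b))\<^sup>2) \<le> 1"
      and x2: "c - \<epsilon> < sqrt (\<Sum>a\<in>multi_indices t. (cmod (\<Sum>b\<in>multi_indices t. X a b * x b))\<^sup>2)"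
      unfolding T_def by blast
    define x' where "x' c = (\<Sum>b\<in>multi_indices t. X c b * x b)" for c
    define e where "e = c - \<epsilon>"
    have e0: "e > 0" using False e_def by simp
    have "e\<^sup>2 < (\<Sum>a\<in>multi_indices t. (cmod (x' a))\<^sup>2)"
    proof -
      let ?y = "\<Sum>a\<in>multi_indices t. (cmod (x' a))\<^sup>2"
      have y0: "?y \<ge> 0" by (simp add: sum_nonneg)
      have "e < sqrt ?y" using x2 unfolding x'_def e_def[symmetric] .
      then have "e\<^sup>2 < (sqrt ?y)\<^sup>2" using e0 by (intro power_strict_mono) auto
      then show ?thesis using y0 by simp
    qed
    moreover have "e\<^sup>2 * (\<Sum>b\<in>multi_indices t. (cmod (x b))\<^sup>2) \<le> e\<^sup>2"
      using x1 by (simp add: mult_left_le)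
    ultimately have "0 < (\<Sum>i\<in>multi_indices t. Qf \<mu> t (act t X (Wi x i))) - e\<^sup>2 * (\<Sum>i\<in>multi_indices t. Qf \<mu> t (Wi x i))"
      unfolding act_Wi sum_Qf_Wi[OF pm] x'_def by simp
    then have "0 < (\<Sum>i\<in>multi_indices t. Qf \<mu> t (act t X (Wi x i)) - e\<^sup>2 * Qf \<mu> t (Wi x i))"
      by (simp add: sum_subtractf sum_distrib_left)
    then obtain i where i: "Qf \<mu> t (act t X (Wi x i)) > e\<^sup>2 * Qf \<mu> t (Wi x i)"
      by (metis (no_types, lifting) not_le sum_nonpos diff_le_0_iff_le)
    define q where "q = Qf \<mu> t (Wi x i)"
    have q0: "q \<ge> 0" unfolding q_def by (rule Qf_nonneg)
    have qp: "q > 0"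
    proof (rule ccontr)
      assume "\<not> q > 0"
      then have "q = 0" using q0 by simp
      then have "Qf \<mu> t (act t X (Wi x i)) \<le> 0"
        using upper_main[OF assms(1,2), of t "Wi x i"] unfolding X_def q_def by simp
      then show False using i \<open>q = 0\<close> unfolding q_def by simp
    qed
    define r where "r = 1 / sqrt q"
    define W where "W = (\<lambda>a b. complex_of_real r * Wi x i a b)"
    have r2: "r\<^sup>2 = 1 / q" unfolding r_def using qp by (simp add: power_divide)
    have QW: "Qf \<mu> t W = 1" unfolding W_def Qf_scale r2 q_def[symmetric] using qp by simp
    have "sqrt (Qf \<mu> t (act t X W)) \<in> S" using memS QW by simp
    moreover have "e < sqrt (Qf \<mu> t (act t X W))"
    proof -
      have "Qf \<mu> t (act t X W) = Qf \<mu> t (act t X (Wi x i)) / q"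
        unfolding W_def act_scale Qf_scale r2 by simp
      moreover have "e\<^sup>2 < Qf \<mu> t (act t X (Wi x i)) / q"
        using i qp unfolding q_def[symmetric] by (simp add: field_simps)
      ultimately show ?thesis using e0 by (simp add: real_less_rsqrt)
    qed
    ultimately have "e < Sup S" using cSup_upper[OF _ bdd] by (meson less_le_trans)
    then show ?thesis unfolding e_def by simp
  qed
  have "c \<le> Sup S"
  proof (rule ccontr)
    assume "\<not> c \<le> Sup S"
    then have "(c - Sup S) / 2 > 0" by simp
    from low[OF this] \<open>\<not> c \<le> Sup S\<close> show False by (simp add: field_simps)
  qed
  then have "restricted_diff_opnorm \<mu> \<nu> t = c"
    using up unfolding restricted_diff_opnorm_def S_def[symmetric] by simp
  then show ?thesis unfolding c_def X_def Xm_def .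
qed

end
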